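(* Let $(X_1,X_2,X_3)$ be nonnegative random variables with a common marginal survival function $\bar F$ and Farlie–Gumbel–Morgenstern survival copula $\hat C(u_1,u_2,u_3)=u_1u_2u_3[1+\theta(1-u_1)(1-u_2)(1-u_3)]$, $-1\le\theta\le1$. Let $t>0$ with $0<k:=\bar F(t)<1$, and define $\mathbf{X}_t=(X_1-t,X_2-t\mid X_1>t,X_2>t)$, $\mathbf{X}^{(3)}_t=(X_1-t,X_2-t\mid X_1>t,X_2>t,X_3\le t)$, $\mathbf{X}^*_t=(X_1-t,X_2-t\mid X_1>t,X_2>t,X_3>t)$. Then the joint survival functions of these three vectors are $\hat D(\bar F_t(x_1),\bar F_t(x_2))$ with $\bar F_t(x)=\bar F(t+x)/\bar F(t)$ and respective dual distortions $\hat D_t(u_1,u_2)=u_1u_2$, $\hat D^{(3)}_t(u_1,u_2)=u_1u_2\dfrac{1-\theta k(1-ku_1)(1-ku_2)}{1-\theta k(1-k)^2}$, $\hat D^{*}_t(u_1,u_2)=u_1u_2\dfrac{1+\theta(1-ku_1)(1-ku_2)(1-k)}{1+\theta(1-k)^3}$. Moreover $\hat D^*_t\le\hat D_t\le\hat D^{(3)}_t$ when $\theta\le0$ and $\hat D^*_t\ge\hat D_t\ge\hat D^{(3)}_t$ when $\theta\ge0$; consequently $\mathbf{X}^*_t\le_{uo}\mathbf{X}_t\le_{uo}\mathbf{X}^{(3)}_t$ for $\theta\le0$, and the reverse orderings hold for $\theta\ge0$.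
   Context: Upper orthant order: $\mathbf{X}\le_{uo}\mathbf{Y}$ iff $\Pr(\mathbf{X}>\mathbf{x})\le\Pr(\mathbf{Y}>\mathbf{x})$ for all $\mathbf{x}$ (componentwise). *)

theory Defs
  imports "HOL-Probability.Probability"
begin

definition fgm3 :: "real \<Rightarrow> real \<Rightarrow> real \<Rightarrow> real \<Rightarrow> real" where
  "fgm3 \<theta> u1 u2 u3 = u1 * u2 * u3 * (1 + \<theta> * (1 - u1) * (1 - u2) * (1 - u3))"

definition surv2 :: "'a measure \<Rightarrow> ('a \<Rightarrow> real) \<Rightarrow> ('a \<Rightarrow> real) \<Rightarrow> real \<Rightarrow> real \<Rightarrow> real" where
  "surv2 N Y1 Y2 x1 x2 = measure N {\<omega> \<in> space N. x1 < Y1 \<omega> \<and> x2 < Y2 \<omega>}"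

definition uo_le2 :: "'a measure \<Rightarrow> ('a \<Rightarrow> real) \<Rightarrow> ('a \<Rightarrow> real) \<Rightarrow>
    'b measure \<Rightarrow> ('b \<Rightarrow> real) \<Rightarrow> ('b \<Rightarrow> real) \<Rightarrow> bool" where
  "uo_le2 N Y1 Y2 P Z1 Z2 \<longleftrightarrow> (\<forall>x1 x2. surv2 N Y1 Y2 x1 x2 \<le> surv2 P Z1 Z2 x1 x2)"

text \<open>The three dual distortions (k = survival function at t).\<close>
definition Dt :: "real \<Rightarrow> real \<Rightarrow> real" where
  "Dt u1 u2 = u1 * u2"

definition D3t :: "real \<Rightarrow> real \<Rightarrow> real \<Rightarrow> real \<Rightarrow> real" where
  "D3t \<theta> k u1 u2 = u1 * u2 * (1 - \<theta> * k * (1 - k * u1) * (1 - k * u2)) / (1 - \<theta> * k * (1 - k)^2)"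

definition Dstart :: "real \<Rightarrow> real \<Rightarrow> real \<Rightarrow> real \<Rightarrow> real" where
  "Dstart \<theta> k u1 u2 = u1 * u2 * (1 + \<theta> * (1 - k * u1) * (1 - k * u2) * (1 - k)) / (1 + \<theta> * (1 - k)^3)"

end

theory Submission
  imports Defs
begin

lemma unif_meas:
  assumes "prob_space M" "A \<in> sets M" "measure M A > 0" "B \<in> sets M"
  shows "measure (uniform_measure M A) B = measure M (A \<inter> B) / measure M A"
proof -
  interpret prob_space M by fact
  show ?thesis
    by (rule measure_uniform_measure) (use assms in \<open>auto simp: emeasure_eq_measure\<close>)
qed

lemma ratio_le:
  fixes N D c :: real
  assumes "N \<le> D" "0 < D" "0 \<le> c"
  shows "c * N / D \<le> c"
proof -
  have "N / D \<le> 1" using assms by simp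
  then have "c * (N / D) \<le> c * 1" using assms(3) by (rule mult_left_mono)
  then show ?thesis by simp
qed

lemma ratio_ge:
  fixes N D c :: real
  assumes "D \<le> N" "0 < D" "0 \<le> c"
  shows "c \<le> c * N / D"
proof -
  have "1 \<le> N / D" using assms by simp
  then have "c * 1 \<le> c * (N / D)" using assms(3) by (rule mult_left_mono)
  then show ?thesis by simp
qed

theorem mainTheorem12:
  fixes M :: "'a measure" and X1 X2 X3 :: "'a \<Rightarrow> real"
    and Fbar :: "real \<Rightarrow> real" and \<theta> t :: real
  assumes "prob_space M"
    and meas: "X1 \<in> borel_measurable M" "X2 \<in> borel_measurable M" "X3 \<in> borel_measurable M"
    and nonneg: "\<forall>\<omega>\<in>space M. 0 \<le> X1 \<omega> \<and> 0 \<le> X2 \<omega> \<and> 0 \<le> X3 \<omega>"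
    and marg: "\<forall>x. measure M {\<omega>\<in>space M. x < X1 \<omega>} = Fbar x
                 \<and> measure M {\<omega>\<in>space M. x < X2 \<omega>} = Fbar x
                 \<and> measure M {\<omega>\<in>space M. x < X3 \<omega>} = Fbar x"
    and copula: "\<forall>x1 x2 x3. measure M {\<omega>\<in>space M. x1 < X1 \<omega> \<and> x2 < X2 \<omega> \<and> x3 < X3 \<omega>}
                   = fgm3 \<theta> (Fbar x1) (Fbar x2) (Fbar x3)"
    and theta: "-1 \<le> \<theta>" "\<theta> \<le> 1"
    and tpos: "0 < t"
    and k: "0 < Fbar t" "Fbar t < 1"
  defines "A \<equiv> {\<omega>\<in>space M. t < X1 \<omega> \<and> t < X2 \<omega>}"
    and "A3 \<equiv> {\<omega>\<in>space M. t < X1 \<omega> \<and> t < X2 \<omega> \<and> X3 \<omega> \<le> t}"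
    and "As \<equiv> {\<omega>\<in>space M. t < X1 \<omega> \<and> t < X2 \<omega> \<and> t < X3 \<omega>}"
    and "k \<equiv> Fbar t"
    and "Y1 \<equiv> (\<lambda>\<omega>. X1 \<omega> - t)"
    and "Y2 \<equiv> (\<lambda>\<omega>. X2 \<omega> - t)"
  shows
    "(\<forall>x1\<ge>0. \<forall>x2\<ge>0.
        surv2 (uniform_measure M A) Y1 Y2 x1 x2 = Dt (Fbar (t + x1) / k) (Fbar (t + x2) / k)
      \<and> surv2 (uniform_measure M A3) Y1 Y2 x1 x2 = D3t \<theta> k (Fbar (t + x1) / k) (Fbar (t + x2) / k)
      \<and> surv2 (uniform_measure M As) Y1 Y2 x1 x2 = Dstart \<theta> k (Fbar (t + x1) / k) (Fbar (t + x2) / k))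
   \<and> (\<theta> \<le> 0 \<longrightarrow> (\<forall>u1\<in>{0..1}. \<forall>u2\<in>{0..1}.
        Dstart \<theta> k u1 u2 \<le> Dt u1 u2 \<and> Dt u1 u2 \<le> D3t \<theta> k u1 u2))
   \<and> (0 \<le> \<theta> \<longrightarrow> (\<forall>u1\<in>{0..1}. \<forall>u2\<in>{0..1}.
        Dstart \<theta> k u1 u2 \<ge> Dt u1 u2 \<and> Dt u1 u2 \<ge> D3t \<theta> k u1 u2))
   \<and> (\<theta> \<le> 0 \<longrightarrow> uo_le2 (uniform_measure M As) Y1 Y2 (uniform_measure M A) Y1 Y2
                 \<and> uo_le2 (uniform_measure M A) Y1 Y2 (uniform_measure M A3) Y1 Y2)
   \<and> (0 \<le> \<theta> \<longrightarrow> uo_le2 (uniform_measure M A) Y1 Y2 (uniform_measure M As) Y1 Y2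
                 \<and> uo_le2 (uniform_measure M A3) Y1 Y2 (uniform_measure M A) Y1 Y2)"
proof -
  interpret P: prob_space M by fact
  have [measurable]: "X1 \<in> borel_measurable M" "X2 \<in> borel_measurable M" "X3 \<in> borel_measurable M"
    using meas by auto
  define S2 where "S2 a b = {\<omega>\<in>space M. a < X1 \<omega> \<and> b < X2 \<omega>}" for a b
  define S3 where "S3 a b c = {\<omega>\<in>space M. a < X1 \<omega> \<and> b < X2 \<omega> \<and> c < X3 \<omega>}" for a b c
  have S2m[measurable]: "S2 a b \<in> sets M" for a b unfolding S2_def by measurable
  have S3m[measurable]: "S3 a b c \<in> sets M" for a b c unfolding S3_def by measurable
  have F1: "Fbar x = 1" if "x < 0" for x
  proof -
    have "{\<omega>\<in>space M. x < X1 \<omega>} = space M" using nonneg that by force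
    then show ?thesis using marg P.prob_space by metis
  qed
  have Fnn: "0 \<le> Fbar x" for x using marg by (metis measure_nonneg)
  have P3: "measure M (S3 a b c) = fgm3 \<theta> (Fbar a) (Fbar b) (Fbar c)" for a b c
    using copula unfolding S3_def by blast
  have P2: "measure M (S2 a b) = Fbar a * Fbar b" for a b
  proof -
    have "S2 a b = S3 a b (-1)" unfolding S2_def S3_def using nonneg by force
    then show ?thesis using P3[of a b "-1"] F1[of "-1"] by (simp add: fgm3_def)
  qed
  have Fmono: "Fbar (t + x) \<le> k" if "0 \<le> x" for x
  proof -
    have "{\<omega>\<in>space M. t + x < X1 \<omega>} \<subseteq> {\<omega>\<in>space M. t < X1 \<omega>}" using that by auto
    then have "measure M {\<omega>\<in>space M. t + x < X1 \<omega>} \<le> measure M {\<omega>\<in>space M. t < X1 \<omega>}"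
      by (intro P.finite_measure_mono) measurable
    then show ?thesis using marg unfolding k_def by metis
  qed
  have kpos: "0 < k" "k < 1" using k unfolding k_def by auto
  have Am[measurable]: "A \<in> sets M" unfolding A_def by measurable
  have A3m[measurable]: "A3 \<in> sets M" unfolding A3_def by measurable
  have Asm[measurable]: "As \<in> sets M" unfolding As_def by measurable
  have AS2: "A = S2 t t" unfolding A_def S2_def by auto
  have AsS3: "As = S3 t t t" unfolding As_def S3_def by auto
  have A3S: "A3 = S2 t t - S3 t t t" unfolding A3_def S2_def S3_def by auto
  have d1pos: "0 < 1 + \<theta> * (1 - k)^3"
  proof -
    have "(1 - k)^3 < 1" using kpos by (simp add: power_less_one_iff)
    moreover have "0 \<le> (1-k)^3" using kpos by simp
    moreover have "- 1 * ((1-k)^3) \<le> \<theta> * (1 - k)^3"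
      using mult_right_mono[OF theta(1) \<open>0 \<le> (1-k)^3\<close>] .
    ultimately show ?thesis by linarith
  qed
  have d3pos: "0 < 1 - \<theta> * k * (1 - k)^2"
  proof -
    have "(1 - k)^2 \<le> 1" using kpos by (simp add: power_le_one)
    then have "k * (1 - k)^2 \<le> k * 1" using kpos by (intro mult_left_mono) auto
    then have "k * (1 - k)^2 < 1" using kpos by linarith
    moreover have "0 \<le> k * (1-k)^2" using kpos by simp
    moreover have "\<theta> * (k * (1 - k)^2) \<le> 1 * (k * (1-k)^2)"
      using mult_right_mono[OF theta(2) \<open>0 \<le> k * (1-k)^2\<close>] .
    ultimately show ?thesis by (simp add: mult.assoc)
  qed
  have mA: "measure M A = k^2" using P2[of t t] AS2 unfolding k_def by (simp add: power2_eq_square)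
  have mAs: "measure M As = k^3 * (1 + \<theta> * (1 - k)^3)"
    using P3[of t t t] AsS3 unfolding k_def fgm3_def by (simp add: power3_eq_cube algebra_simps)
  have sub: "S3 t t t \<subseteq> S2 t t" unfolding S2_def S3_def by auto
  have mA3: "measure M A3 = k^2 * (1 - k) * (1 - \<theta> * k * (1 - k)^2)"
    using A3S P.finite_measure_Diff[OF S2m S3m sub] P2[of t t] P3[of t t t]
    unfolding k_def fgm3_def by (simp add: power2_eq_square algebra_simps)
  have mApos: "measure M A > 0" using mA kpos by simp
  have mAspos: "measure M As > 0" using mAs kpos d1pos by simp
  have mA3pos: "measure M A3 > 0" using mA3 kpos d3pos by simp
  have surv_eq: "surv2 (uniform_measure M Z) Y1 Y2 x1 x2 = measure M (Z \<inter> S2 (t + x1) (t + x2)) / measure M Z"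
    if "Z \<in> sets M" "measure M Z > 0" for Z x1 x2
  proof -
    have "{\<omega> \<in> space (uniform_measure M Z). x1 < Y1 \<omega> \<and> x2 < Y2 \<omega>} = S2 (t + x1) (t + x2)"
      unfolding S2_def Y1_def Y2_def by auto
    then show ?thesis unfolding surv2_def using unif_meas[OF assms(1) that S2m] by simp
  qed
  have redZ: "Z \<inter> S2 (t + x1) (t + x2) = Z \<inter> S2 (t + max x1 0) (t + max x2 0)"
    if "Z \<subseteq> A" for Z x1 x2
    using that unfolding A_def S2_def by (auto simp: max_def)
  have AsA: "As \<subseteq> A" "A3 \<subseteq> A" unfolding As_def A3_def A_def by auto
  have red: "surv2 (uniform_measure M Z) Y1 Y2 x1 x2 = surv2 (uniform_measure M Z) Y1 Y2 (max x1 0) (max x2 0)"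
    if "Z \<in> {A, A3, As}" for Z x1 x2
  proof -
    have "Z \<in> sets M" "measure M Z > 0" "Z \<subseteq> A" using that mApos mAspos mA3pos AsA by auto
    then show ?thesis using surv_eq redZ by metis
  qed
  have formulas: "surv2 (uniform_measure M A) Y1 Y2 x1 x2 = Dt (Fbar (t + x1) / k) (Fbar (t + x2) / k)
      \<and> surv2 (uniform_measure M A3) Y1 Y2 x1 x2 = D3t \<theta> k (Fbar (t + x1) / k) (Fbar (t + x2) / k)
      \<and> surv2 (uniform_measure M As) Y1 Y2 x1 x2 = Dstart \<theta> k (Fbar (t + x1) / k) (Fbar (t + x2) / k)"
    if x: "0 \<le> x1" "0 \<le> x2" for x1 x2
  proof -
    define a b where "a = Fbar (t + x1)" and "b = Fbar (t + x2)"
    have i1: "A \<inter> S2 (t + x1) (t + x2) = S2 (t + x1) (t + x2)"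
      unfolding A_def S2_def using x by auto
    have i2: "As \<inter> S2 (t + x1) (t + x2) = S3 (t + x1) (t + x2) t"
      unfolding As_def S2_def S3_def using x by auto
    have i3: "A3 \<inter> S2 (t + x1) (t + x2) = S2 (t + x1) (t + x2) - S3 (t + x1) (t + x2) t"
      unfolding A3_def S2_def S3_def using x by auto
    have sub': "S3 (t + x1) (t + x2) t \<subseteq> S2 (t + x1) (t + x2)" unfolding S2_def S3_def by auto
    have e1: "surv2 (uniform_measure M A) Y1 Y2 x1 x2 = a * b / k^2"
      using surv_eq[OF Am mApos] i1 P2 mA unfolding a_def b_def by simp
    have e2: "surv2 (uniform_measure M As) Y1 Y2 x1 x2 = a * b * k * (1 + \<theta> * (1 - a) * (1 - b) * (1 - k)) / (k^3 * (1 + \<theta> * (1 - k)^3))"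
      using surv_eq[OF Asm mAspos] i2 P3 mAs unfolding a_def b_def k_def fgm3_def by simp
    have e3: "surv2 (uniform_measure M A3) Y1 Y2 x1 x2 = (a * b - a * b * k * (1 + \<theta> * (1 - a) * (1 - b) * (1 - k))) / (k^2 * (1 - k) * (1 - \<theta> * k * (1 - k)^2))"
      using surv_eq[OF A3m mA3pos] i3 P.finite_measure_Diff[OF S2m S3m sub'] P2 P3 mA3
      unfolding a_def b_def k_def fgm3_def by simp
    have kne: "k \<noteq> 0" "1 - k \<noteq> 0" using kpos by auto
    have "a * b / k^2 = Dt (a / k) (b / k)" unfolding Dt_def using kne by (simp add: field_simps power2_eq_square)
    moreover have "a * b * k * (1 + \<theta> * (1 - a) * (1 - b) * (1 - k)) / (k^3 * (1 + \<theta> * (1 - k)^3)) = Dstart \<theta> k (a / k) (b / k)"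
    proof -
      have h: "x * k / (k^3 * D) = (x / k / k) / D" for x D :: real
        using kne by (simp add: power3_eq_cube field_simps)
      have "k * (a / k) = a" "k * (b / k) = b" using kne by auto
      then have "Dstart \<theta> k (a / k) (b / k) = (a * b * (1 + \<theta> * (1 - a) * (1 - b) * (1 - k))) / k / k / (1 + \<theta> * (1 - k)^3)"
        unfolding Dstart_def by (simp add: field_simps)
      also have "\<dots> = (a * b * (1 + \<theta> * (1 - a) * (1 - b) * (1 - k))) * k / (k^3 * (1 + \<theta> * (1 - k)^3))"
        using h by simp
      finally show ?thesis by (simp add: ac_simps)
    qed
    moreover have "(a * b - a * b * k * (1 + \<theta> * (1 - a) * (1 - b) * (1 - k))) / (k^2 * (1 - k) * (1 - \<theta> * k * (1 - k)^2)) = D3t \<theta> k (a / k) (b / k)"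
    proof -
      define D where "D = 1 - \<theta> * k * (1 - k)^2"
      have num: "a * b - a * b * k * (1 + \<theta> * (1 - a) * (1 - b) * (1 - k)) = (a * b * (1 - \<theta> * k * (1 - a) * (1 - b))) * (1 - k)"
        by (simp add: algebra_simps)
      have h: "x * (1 - k) / (k^2 * (1 - k) * D) = (x / k / k) / D" for x
      proof -
        have "x * (1 - k) / (k^2 * (1 - k) * D) = x * (1 - k) / ((k^2 * D) * (1 - k))"
          by (simp add: ac_simps)
        also have "\<dots> = x / (k^2 * D)"
          by (rule nonzero_mult_divide_mult_cancel_right) (use kne in auto)
        also have "\<dots> = (x / k / k) / D" by (simp add: power2_eq_square divide_divide_eq_left ac_simps)
        finally show ?thesis .
      qed
      have "k * (a / k) = a" "k * (b / k) = b" using kne by auto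
      then have "D3t \<theta> k (a / k) (b / k) = (a * b * (1 - \<theta> * k * (1 - a) * (1 - b))) / k / k / D"
        unfolding D3t_def D_def by (simp add: field_simps)
      also have "\<dots> = (a * b - a * b * k * (1 + \<theta> * (1 - a) * (1 - b) * (1 - k))) / (k^2 * (1 - k) * D)"
        unfolding num h ..
      finally show ?thesis unfolding D_def by simp
    qed
    ultimately show ?thesis using e1 e2 e3 unfolding a_def b_def by simp
  qed
  have key: "(1 - k)^2 \<le> (1 - k * u1) * (1 - k * u2)" if "u1 \<in> {0..1}" "u2 \<in> {0..1}" for u1 u2
  proof -
    have "1 - k \<le> 1 - k * u1" "1 - k \<le> 1 - k * u2" using that kpos
      by (auto intro!: mult_left_le_one_le simp: mult_le_cancel_left1)
    moreover have "0 \<le> 1 - k" using kpos by simp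
    ultimately show ?thesis by (simp add: power2_eq_square mult_mono)
  qed
  have ineq_neg: "Dstart \<theta> k u1 u2 \<le> Dt u1 u2 \<and> Dt u1 u2 \<le> D3t \<theta> k u1 u2"
    if th: "\<theta> \<le> 0" and u: "u1 \<in> {0..1}" "u2 \<in> {0..1}" for u1 u2
  proof -
    have c: "0 \<le> u1 * u2" using u by simp
    have q: "(1 - k)^2 \<le> (1 - k * u1) * (1 - k * u2)" using key u .
    have q2: "(1 - k)^3 \<le> (1 - k * u1) * (1 - k * u2) * (1 - k)"
      using mult_right_mono[OF q, of "1 - k"] kpos by (simp add: power2_eq_square power3_eq_cube)
    have q3: "k * (1 - k)^2 \<le> k * ((1 - k * u1) * (1 - k * u2))"
      using mult_left_mono[OF q, of k] kpos by simp
    have n1: "1 + \<theta> * (1 - k * u1) * (1 - k * u2) * (1 - k) \<le> 1 + \<theta> * (1 - k)^3"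
      using mult_left_mono_neg[OF q2 th] by (simp add: mult.assoc)
    have n3: "1 - \<theta> * k * (1 - k)^2 \<le> 1 - \<theta> * k * (1 - k * u1) * (1 - k * u2)"
      using mult_left_mono_neg[OF q3 th] by (simp add: mult.assoc)
    show ?thesis unfolding Dstart_def D3t_def Dt_def
      using ratio_le[OF n1 d1pos c] ratio_ge[OF n3 d3pos c] by simp
  qed
  have ineq_pos: "Dstart \<theta> k u1 u2 \<ge> Dt u1 u2 \<and> Dt u1 u2 \<ge> D3t \<theta> k u1 u2"
    if th: "0 \<le> \<theta>" and u: "u1 \<in> {0..1}" "u2 \<in> {0..1}" for u1 u2
  proof -
    have c: "0 \<le> u1 * u2" using u by simp
    have q: "(1 - k)^2 \<le> (1 - k * u1) * (1 - k * u2)" using key u .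
    have q2: "(1 - k)^3 \<le> (1 - k * u1) * (1 - k * u2) * (1 - k)"
      using mult_right_mono[OF q, of "1 - k"] kpos by (simp add: power2_eq_square power3_eq_cube)
    have q3: "k * (1 - k)^2 \<le> k * ((1 - k * u1) * (1 - k * u2))"
      using mult_left_mono[OF q, of k] kpos by simp
    have n1: "1 + \<theta> * (1 - k)^3 \<le> 1 + \<theta> * (1 - k * u1) * (1 - k * u2) * (1 - k)"
      using mult_left_mono[OF q2 th] by (simp add: mult.assoc)
    have n3: "1 - \<theta> * k * (1 - k * u1) * (1 - k * u2) \<le> 1 - \<theta> * k * (1 - k)^2"
      using mult_left_mono[OF q3 th] by (simp add: mult.assoc)
    show ?thesis unfolding Dstart_def D3t_def Dt_def
      using ratio_ge[OF n1 d1pos c] ratio_le[OF n3 d3pos c] by simp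
  qed
  have uin: "Fbar (t + max x 0) / k \<in> {0..1}" for x
    using Fmono[of "max x 0"] Fnn[of "t + max x 0"] kpos by auto
  have uo_neg: "uo_le2 (uniform_measure M As) Y1 Y2 (uniform_measure M A) Y1 Y2
                 \<and> uo_le2 (uniform_measure M A) Y1 Y2 (uniform_measure M A3) Y1 Y2" if th: "\<theta> \<le> 0"
    unfolding uo_le2_def
  proof (intro conjI allI)
    fix x1 x2 :: real
    have f: "0 \<le> max x1 0" "0 \<le> max x2 0" by simp_all
    note I = ineq_neg[OF th uin[of x1] uin[of x2]]
    note F = formulas[OF f]
    show "surv2 (uniform_measure M As) Y1 Y2 x1 x2 \<le> surv2 (uniform_measure M A) Y1 Y2 x1 x2"
      using red[of As x1 x2] red[of A x1 x2] I F by simp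
    show "surv2 (uniform_measure M A) Y1 Y2 x1 x2 \<le> surv2 (uniform_measure M A3) Y1 Y2 x1 x2"
      using red[of A3 x1 x2] red[of A x1 x2] I F by simp
  qed
  have uo_pos: "uo_le2 (uniform_measure M A) Y1 Y2 (uniform_measure M As) Y1 Y2
                 \<and> uo_le2 (uniform_measure M A3) Y1 Y2 (uniform_measure M A) Y1 Y2" if th: "0 \<le> \<theta>"
    unfolding uo_le2_def
  proof (intro conjI allI)
    fix x1 x2 :: real
    have f: "0 \<le> max x1 0" "0 \<le> max x2 0" by simp_all
    note I = ineq_pos[OF th uin[of x1] uin[of x2]]
    note F = formulas[OF f]
    show "surv2 (uniform_measure M A) Y1 Y2 x1 x2 \<le> surv2 (uniform_measure M As) Y1 Y2 x1 x2"
      using red[of As x1 x2] red[of A x1 x2] I F by simp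
    show "surv2 (uniform_measure M A3) Y1 Y2 x1 x2 \<le> surv2 (uniform_measure M A) Y1 Y2 x1 x2"
      using red[of A3 x1 x2] red[of A x1 x2] I F by simp
  qed
  show ?thesis using formulas ineq_neg ineq_pos uo_neg uo_pos by blast
qed

end
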